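(* Let $A$ be a real symmetric $n\times n$ matrix with $A\mathbf{1}_n=\rho_A\mathbf{1}_n$ for some $\rho_A>0$, and let $B$ be a real symmetric $m\times m$ matrix with $B\mathbf{1}_m=\rho_B\mathbf{1}_m$ for some $\rho_B>0$. Then (a) $n_-(A\diamond B)=n_-(A)+n_-(B)$, (b) $n_+(A\diamond B)=n_+(A)+n_+(B)-1$, and (c) $n_0(A\diamond B)=nm-n-m+1+n_0(A)+n_0(B)$.
   Context: $\mathbf{1}_k$ is the all-ones column vector of length $k$ and $J_k$ the $k\times k$ all-ones matrix. For an $n\times n$ matrix $A=(a_{ij})$ and an $m\times m$ matrix $B$, $A\diamond B=A\otimes J_m+J_n\otimes B$ is the $nm\times nm$ block matrix whose $(i,j)$ block is $a_{ij}J_m+B$. For a real symmetric matrix $M$, $n_+(M)$, $n_-(M)$, $n_0(M)$ denote the numbers of positive, negative, and zero eigenvalues of $M$, counted with multiplicity. *)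

theory Defs
  imports "Jordan_Normal_Form.Char_Poly"
begin

definition n_pos :: "real mat \<Rightarrow> nat" where
  "n_pos M = (\<Sum>x\<in>{x. x > 0 \<and> poly (char_poly M) x = 0}. order x (char_poly M))"

definition n_neg :: "real mat \<Rightarrow> nat" where
  "n_neg M = (\<Sum>x\<in>{x. x < 0 \<and> poly (char_poly M) x = 0}. order x (char_poly M))"

definition n_zero :: "real mat \<Rightarrow> nat" where
  "n_zero M = order 0 (char_poly M)"

definition ones_vec :: "nat \<Rightarrow> real vec" where
  "ones_vec k = vec k (\<lambda>_. 1)"

text \<open>A \<diamond> B = A \<otimes> J_m + J_n \<otimes> B for A n\<times>n and B m\<times>m: entry at row i*m+p,
  column j*m+q is a_ij + b_pq.\<close>
definition diamond :: "real mat \<Rightarrow> real mat \<Rightarrow> real mat" where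
  "diamond A B = (let n = dim_row A; m = dim_row B in
     mat (n * m) (n * m) (\<lambda>(r, c). A $$ (r div m, c div m) + B $$ (r mod m, c mod m)))"

end

theory Submission
  imports Defs "Jordan_Normal_Form.Jordan_Normal_Form_Existence"
begin


interpretation of_real_poly: map_poly_inj_idom_divide_hom "of_real :: real \<Rightarrow> complex" ..

lemma order_cp_smult_real:
  fixes M :: "real mat"
  assumes M: "M \<in> carrier_mat n n" and c: "c \<noteq> 0"
  shows "order x (char_poly (c \<cdot>\<^sub>m M)) = order (x / c) (char_poly M)"
proof -
  let ?h = "of_real :: real \<Rightarrow> complex"
  have cM: "c \<cdot>\<^sub>m M \<in> carrier_mat n n" using M by simp
  have e: "map_mat ?h (c \<cdot>\<^sub>m M) = ?h c \<cdot>\<^sub>m map_mat ?h M"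
    by (rule eq_matI, insert M, auto)
  have "order x (char_poly (c \<cdot>\<^sub>m M)) = order (?h x) (map_poly ?h (char_poly (c \<cdot>\<^sub>m M)))"
    by (rule of_real_poly.order_hom[symmetric])
  also have "\<dots> = order (?h x) (char_poly (?h c \<cdot>\<^sub>m map_mat ?h M))"
    unfolding e[symmetric] of_real_hom.char_poly_hom[OF cM] ..
  also have "\<dots> = order (?h x / ?h c) (char_poly (map_mat ?h M))"
    by (rule order_char_poly_smult, insert M c, auto)
  also have "\<dots> = order (?h (x/c)) (map_poly ?h (char_poly M))"
    unfolding of_real_hom.char_poly_hom[OF M] by simp
  also have "\<dots> = order (x/c) (char_poly M)" by (rule of_real_poly.order_hom)
  finally show ?thesis .
qed

lemma char_poly_nz: assumes "(M :: real mat) \<in> carrier_mat n n" shows "char_poly M \<noteq> 0"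
  using degree_monic_char_poly[OF assms] by auto

definition cnt :: "(real \<Rightarrow> bool) \<Rightarrow> real poly \<Rightarrow> nat" where
  "cnt P p = (\<Sum>x\<in>{x. P x \<and> poly p x = 0}. order x p)"

lemma cnt_finite: "(p :: real poly) \<noteq> 0 \<Longrightarrow> finite {x. P x \<and> poly p x = 0}"
  by (rule finite_subset[OF _ poly_roots_finite[of p]], auto)

lemma cnt_superset: assumes p: "p \<noteq> 0" and S: "finite S" "{x. P x \<and> poly p x = 0} \<subseteq> S"
  and SP: "\<And>x. x \<in> S \<Longrightarrow> P x"
  shows "cnt P p = (\<Sum>x\<in>S. order x p)"
  unfolding cnt_def
  by (rule sum.mono_neutral_left[OF S(1) S(2)], insert SP p, auto simp: order_root)

lemma cnt_mult: assumes p: "p \<noteq> 0" and q: "q \<noteq> 0"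
  shows "cnt P (p * q) = cnt P p + cnt P q"
proof -
  let ?S = "{x. P x \<and> poly (p*q) x = 0}"
  have fin: "finite ?S" by (rule cnt_finite, insert p q, auto)
  have "cnt P (p*q) = (\<Sum>x\<in>?S. order x p + order x q)"
    unfolding cnt_def by (rule sum.cong, insert p q, auto simp: order_mult)
  also have "\<dots> = (\<Sum>x\<in>?S. order x p) + (\<Sum>x\<in>?S. order x q)" by (rule sum.distrib)
  also have "(\<Sum>x\<in>?S. order x p) = cnt P p"
    by (rule cnt_superset[symmetric, OF p fin], auto)
  also have "(\<Sum>x\<in>?S. order x q) = cnt P q"
    by (rule cnt_superset[symmetric, OF q fin], auto)
  finally show ?thesis .
qed

lemma cnt_linear: "cnt P [:-a, 1:] = (if P a then 1 else 0)"
proof -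
  have "{x. P x \<and> poly [:-a, 1:] x = 0} = (if P a then {a} else {})" by auto
  thus ?thesis unfolding cnt_def by auto
qed

lemma cnt_X_pow: assumes "\<not> P 0" shows "cnt P ([:0, 1:] ^ k) = 0"
proof -
  have "{x. P x \<and> poly ([:0, 1:] ^ k) x = 0} = {}" using assms by (auto simp: poly_power)
  thus ?thesis unfolding cnt_def by simp
qed

lemma cnt_smult_cp: assumes M: "(M :: real mat) \<in> carrier_mat n n" and c: "c > 0"
  and P: "\<And>x. P (c * x) = P x"
  shows "cnt P (char_poly (c \<cdot>\<^sub>m M)) = cnt P (char_poly M)"
proof -
  let ?q = "char_poly (c \<cdot>\<^sub>m M)" let ?p = "char_poly M"
  have q: "?q \<noteq> 0" by (rule char_poly_nz, insert M, auto)
  have p: "?p \<noteq> 0" by (rule char_poly_nz[OF M])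
  have ord: "order x ?q = order (x / c) ?p" for x using order_cp_smult_real[OF M] c by auto
  have root: "poly ?q x = 0 \<longleftrightarrow> poly ?p (x / c) = 0" for x
    using ord[of x] p q by (simp add: order_root)
  have set: "{x. P x \<and> poly ?q x = 0} = (\<lambda>y. c * y) ` {y. P y \<and> poly ?p y = 0}"
  proof (rule equalityI; rule subsetI)
    fix x assume "x \<in> {x. P x \<and> poly ?q x = 0}"
    hence "P x" "poly ?p (x / c) = 0" using root by auto
    moreover have "x = c * (x / c)" using c by auto
    ultimately show "x \<in> (\<lambda>y. c * y) ` {y. P y \<and> poly ?p y = 0}"
      using P[of "x/c"] by (metis (mono_tags, lifting) image_eqI mem_Collect_eq)
  next
    fix x assume "x \<in> (\<lambda>y. c * y) ` {y. P y \<and> poly ?p y = 0}"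
    then obtain y where "x = c * y" "P y" "poly ?p y = 0" by auto
    thus "x \<in> {x. P x \<and> poly ?q x = 0}" using root[of x] P[of y] c by auto
  qed
  have "cnt P ?q = (\<Sum>x\<in>(\<lambda>y. c * y) ` {y. P y \<and> poly ?p y = 0}. order x ?q)"
    unfolding cnt_def set ..
  also have "\<dots> = (\<Sum>y\<in>{y. P y \<and> poly ?p y = 0}. order (c * y) ?q)"
    by (rule sum.reindex_cong[OF _ refl refl], insert c, auto simp: inj_on_def)
  also have "\<dots> = cnt P ?p" unfolding cnt_def ord using c by simp
  finally show ?thesis .
qed

lemma n_pos_cnt: "n_pos M = cnt (\<lambda>x. x > 0) (char_poly M)"
  unfolding n_pos_def cnt_def ..
lemma n_neg_cnt: "n_neg M = cnt (\<lambda>x. x < 0) (char_poly M)"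
  unfolding n_neg_def cnt_def ..




lemma sum_lessThan_mult: assumes m: "(m::nat) > 0"
  shows "(\<Sum>k<n*m. f k) = (\<Sum>j<n. \<Sum>q<m. f (j*m+q))"
proof -
  have "(\<Sum>k<n*m. f k) = (\<Sum>(j,q)\<in>{..<n}\<times>{..<m}. f (j*m+q))"
  proof (rule sum.reindex_bij_witness[of _ "\<lambda>(a,b). a*m+b" "\<lambda>k. (k div m, k mod m)"])
    fix a assume "a \<in> {..<n*m}" thus "(a div m, a mod m) \<in> {..<n}\<times>{..<m}"
      using m by (auto simp: less_mult_imp_div_less)
  next
    fix b :: "nat \<times> nat" assume "b \<in> {..<n}\<times>{..<m}"
    then obtain a c where b: "b = (a,c)" "a < n" "c < m" by auto
    have "a * m + c < n * m"
    proof -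
      have "a * m + c < (a + 1) * m" using b by simp
      also have "\<dots> \<le> n * m" using b by (intro mult_right_mono, auto)
      finally show ?thesis .
    qed
    thus "(case b of (a, b) \<Rightarrow> a * m + b) \<in> {..<n * m}" using b by auto
    show "((case b of (a, b) \<Rightarrow> a * m + b) div m, (case b of (a, b) \<Rightarrow> a * m + b) mod m) = b"
      using b m by auto
  qed (auto)
  also have "\<dots> = (\<Sum>j<n. \<Sum>q<m. f (j*m+q))"
    by (rule sum.cartesian_product[symmetric])
  finally show ?thesis .
qed

lemma mult_index: assumes "A \<in> carrier_mat nr n" "B \<in> carrier_mat n nc" "i < nr" "j < nc"
  shows "(A * B) $$ (i,j) = (\<Sum>k<n. A $$ (i,k) * B $$ (k,j))"
  using assms by (auto simp: scalar_prod_def lessThan_atLeast0 intro!: sum.cong)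

definition kron :: "real mat \<Rightarrow> real mat \<Rightarrow> real mat" where
 "kron X Y = mat (dim_row X * dim_row Y) (dim_col X * dim_col Y)
    (\<lambda>(r,c). X $$ (r div dim_row Y, c div dim_col Y) * Y $$ (r mod dim_row Y, c mod dim_col Y))"

lemma kron_carrier: "X \<in> carrier_mat n n \<Longrightarrow> Y \<in> carrier_mat m m \<Longrightarrow> kron X Y \<in> carrier_mat (n*m) (n*m)"
  unfolding kron_def by auto

lemma kron_index: "X \<in> carrier_mat n n \<Longrightarrow> Y \<in> carrier_mat m m \<Longrightarrow> r < n*m \<Longrightarrow> c < n*m \<Longrightarrow>
  kron X Y $$ (r,c) = X $$ (r div m, c div m) * Y $$ (r mod m, c mod m)"
  unfolding kron_def by auto

lemma div_lt: "r < n * m \<Longrightarrow> r div m < (n::nat)"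
  by (simp add: less_mult_imp_div_less)
lemma mod_lt: "r < n * m \<Longrightarrow> r mod m < (m::nat)"
  by (metis mod_less_divisor mult_0_right neq0_conv not_less0)


lemma kron_mult: assumes X: "X \<in> carrier_mat n n" and Z: "Z \<in> carrier_mat n n"
  and Y: "Y \<in> carrier_mat m m" and W: "W \<in> carrier_mat m m" and m: "m > 0"
  shows "kron X Y * kron Z W = kron (X * Z) (Y * W)"
proof (rule eq_matI)
  show "dim_row (kron X Y * kron Z W) = dim_row (kron (X * Z) (Y * W))"
    "dim_col (kron X Y * kron Z W) = dim_col (kron (X * Z) (Y * W))"
    using X Y Z W by (auto simp: kron_def)
  fix r c assume r: "r < dim_row (kron (X * Z) (Y * W))" and c: "c < dim_col (kron (X * Z) (Y * W))"
  hence r: "r < n*m" and c: "c < n * m" using X Y Z W by (auto simp: kron_def)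
  have KX: "kron X Y \<in> carrier_mat (n*m) (n*m)" by (rule kron_carrier[OF X Y])
  have KZ: "kron Z W \<in> carrier_mat (n*m) (n*m)" by (rule kron_carrier[OF Z W])
  have "(kron X Y * kron Z W) $$ (r,c) = (\<Sum>k<n*m. kron X Y $$ (r,k) * kron Z W $$ (k,c))"
    by (rule mult_index[OF KX KZ r c])
  also have "\<dots> = (\<Sum>j<n. \<Sum>q<m. X $$ (r div m, j) * Y $$ (r mod m, q) * (Z $$ (j, c div m) * W $$ (q, c mod m)))"
    unfolding sum_lessThan_mult[OF m]
  proof (intro sum.cong refl)
    fix j q assume "j \<in> {..<n}" "q \<in> {..<m}"
    hence jq: "j < n" "q < m" by auto
    have "j * m + q < (j + 1) * m" using jq by simp
    also have "\<dots> \<le> n * m" using jq by (intro mult_right_mono, auto)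
    finally have lt: "j * m + q < n * m" .
    have dm: "(j*m+q) div m = j" "(j*m+q) mod m = q" using jq by auto
    show "kron X Y $$ (r, j * m + q) * kron Z W $$ (j * m + q, c) =
      X $$ (r div m, j) * Y $$ (r mod m, q) * (Z $$ (j, c div m) * W $$ (q, c mod m))"
      unfolding kron_index[OF X Y r lt] kron_index[OF Z W lt c] dm by simp
  qed
  also have "\<dots> = (\<Sum>j<n. X $$ (r div m, j) * Z $$ (j, c div m)) * (\<Sum>q<m. Y $$ (r mod m, q) * W $$ (q, c mod m))"
    unfolding sum_product by (intro sum.cong refl, simp add: ac_simps)
  also have "\<dots> = kron (X * Z) (Y * W) $$ (r,c)"
  proof -
    have XZ: "X * Z \<in> carrier_mat n n" using X Z by auto
    have YW: "Y * W \<in> carrier_mat m m" using Y W by auto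
    have 1: "(X * Z) $$ (r div m, c div m) = (\<Sum>j<n. X $$ (r div m, j) * Z $$ (j, c div m))"
      by (rule mult_index[OF X Z div_lt[OF r] div_lt[OF c]])
    have 2: "(Y * W) $$ (r mod m, c mod m) = (\<Sum>q<m. Y $$ (r mod m, q) * W $$ (q, c mod m))"
      by (rule mult_index[OF Y W mod_lt[OF r] mod_lt[OF c]])
    show ?thesis unfolding kron_index[OF XZ YW r c] 1 2 ..
  qed
  finally show "(kron X Y * kron Z W) $$ (r,c) = kron (X * Z) (Y * W) $$ (r,c)" .
qed

lemma kron_one: assumes m: "m > 0" shows "kron (1\<^sub>m n) (1\<^sub>m m) = 1\<^sub>m (n*m)"
proof (rule eq_matI)
  fix r c assume "r < dim_row (1\<^sub>m (n*m))" "c < dim_col (1\<^sub>m (n*m))"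
  hence r: "r < n*m" and c: "c < n*m" by auto
  have "(r = c) = (r div m = c div m \<and> r mod m = c mod m)"
    by (metis div_mult_mod_eq)
  thus "kron (1\<^sub>m n) (1\<^sub>m m) $$ (r,c) = 1\<^sub>m (n*m) $$ (r,c)"
    unfolding kron_index[OF one_carrier_mat one_carrier_mat r c] 
    using r c div_lt[OF r] div_lt[OF c] mod_lt[OF r] mod_lt[OF c]
    by auto
qed (auto simp: kron_def)






lemma sum_split0: "(n::nat) > 0 \<Longrightarrow> (\<Sum>i<n. f i) = f 0 + (\<Sum>i\<in>{1..<n}. f i)"
  using sum.atLeast_Suc_lessThan[of 0 n f] by (simp add: lessThan_atLeast0)

definition Smat :: "nat \<Rightarrow> real mat" where
  "Smat n = mat n n (\<lambda>(i,j). if j = 0 then 1 else if i = j then 1 else if i = 0 then -1 else 0)"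
definition Sinv :: "nat \<Rightarrow> real mat" where
  "Sinv n = mat n n (\<lambda>(j,i). if j = 0 then 1 / real n else (if i = j then 1 else 0) - 1 / real n)"

lemma Smat_carrier[simp]: "Smat n \<in> carrier_mat n n" unfolding Smat_def by auto
lemma Sinv_carrier[simp]: "Sinv n \<in> carrier_mat n n" unfolding Sinv_def by auto

lemma Smat_colsum: assumes k: "k < n" shows "(\<Sum>i<n. Smat n $$ (i,k)) = (if k = 0 then real n else 0)"
proof (cases "k = 0")
  case True thus ?thesis using k by (simp add: Smat_def)
next
  case False
  have "(\<Sum>i<n. Smat n $$ (i,k)) = Smat n $$ (0,k) + (\<Sum>i\<in>{1..<n}. Smat n $$ (i,k))"
    by (rule sum_split0, insert k, auto)
  also have "(\<Sum>i\<in>{1..<n}. Smat n $$ (i,k)) = (\<Sum>i\<in>{1..<n}. if i = k then 1 else 0)"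
    by (rule sum.cong, insert k False, auto simp: Smat_def)
  also have "\<dots> = 1" using k False by simp
  finally show ?thesis using k False by (auto simp: Smat_def)
qed

lemma Sinv_rowsum: assumes j: "j < n" shows "(\<Sum>i<n. Sinv n $$ (j,i)) = (if j = 0 then 1 else 0)"
proof (cases "j = 0")
  case True thus ?thesis using j by (simp add: Sinv_def)
next
  case False
  have "(\<Sum>i<n. Sinv n $$ (j,i)) = (\<Sum>i<n. (if i = j then 1 else 0) - 1 / real n)"
    by (rule sum.cong, insert j False, auto simp: Sinv_def)
  also have "\<dots> = 0" unfolding sum_subtractf using j by simp
  finally show ?thesis using False by simp
qed

lemma Sinv_Smat: assumes n: "n > 0" shows "Sinv n * Smat n = 1\<^sub>m n"
proof (rule eq_matI)
  fix j k assume "j < dim_row (1\<^sub>m n)" "k < dim_col (1\<^sub>m n)"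
  hence j: "j < n" and k: "k < n" by auto
  have "(Sinv n * Smat n) $$ (j,k) = (\<Sum>i<n. Sinv n $$ (j,i) * Smat n $$ (i,k))"
    by (rule mult_index[OF _ _ j k], auto)
  also have "\<dots> = 1\<^sub>m n $$ (j,k)"
  proof (cases "j = 0")
    case True
    have "(\<Sum>i<n. Sinv n $$ (j,i) * Smat n $$ (i,k)) = (\<Sum>i<n. (1 / real n) * Smat n $$ (i,k))"
      by (rule sum.cong, insert True j, auto simp: Sinv_def)
    also have "\<dots> = (1 / real n) * (if k = 0 then real n else 0)"
      unfolding sum_distrib_left[symmetric] Smat_colsum[OF k] ..
    finally show ?thesis using True j k n by auto
  next
    case False
    have "(\<Sum>i<n. Sinv n $$ (j,i) * Smat n $$ (i,k)) = 
      (\<Sum>i<n. (if i = j then Smat n $$ (i,k) else 0) - (1 / real n) * Smat n $$ (i,k))"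
      by (rule sum.cong, insert False j, auto simp: Sinv_def algebra_simps)
    also have "\<dots> = Smat n $$ (j,k) - (1 / real n) * (if k = 0 then real n else 0)"
      unfolding sum_subtractf sum_distrib_left[symmetric] Smat_colsum[OF k] using j by simp
    finally show ?thesis using False j k n by (auto simp: Smat_def)
  qed
  finally show "(Sinv n * Smat n) $$ (j,k) = 1\<^sub>m n $$ (j,k)" .
qed (auto simp: Smat_def Sinv_def)

lemma Smat_Sinv: assumes n: "n > 0" shows "Smat n * Sinv n = 1\<^sub>m n"
  by (rule mat_mult_left_right_inverse[OF Sinv_carrier Smat_carrier Sinv_Smat[OF n]])


lemma transf_col0: assumes X: "X \<in> carrier_mat n n" and rs: "\<And>k. k < n \<Longrightarrow> (\<Sum>l<n. X $$ (k,l)) = \<rho>"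
  and i: "i < n"
  shows "(Sinv n * X * Smat n) $$ (i,0) = (if i = 0 then \<rho> else 0)"
proof -
  have n: "0 < n" using i by auto
  have XS: "X * Smat n \<in> carrier_mat n n" using X by auto
  have 1: "(X * Smat n) $$ (k,0) = \<rho>" if k: "k < n" for k
  proof -
    have "(X * Smat n) $$ (k,0) = (\<Sum>l<n. X $$ (k,l) * Smat n $$ (l,0))"
      by (rule mult_index[OF X _ k n], auto)
    also have "\<dots> = (\<Sum>l<n. X $$ (k,l))" by (rule sum.cong, auto simp: Smat_def)
    finally show ?thesis using rs[OF k] by simp
  qed
  have "(Sinv n * X * Smat n) = Sinv n * (X * Smat n)" by (rule assoc_mult_mat[OF Sinv_carrier X Smat_carrier])
  hence "(Sinv n * X * Smat n) $$ (i,0) = (\<Sum>k<n. Sinv n $$ (i,k) * (X * Smat n) $$ (k,0))"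
    using mult_index[OF Sinv_carrier XS i n] by simp
  also have "\<dots> = (\<Sum>k<n. Sinv n $$ (i,k)) * \<rho>" unfolding sum_distrib_right by (rule sum.cong, auto simp: 1)
  finally show ?thesis unfolding Sinv_rowsum[OF i] by simp
qed

lemma transf_row0: assumes X: "X \<in> carrier_mat n n" and cs: "\<And>l. l < n \<Longrightarrow> (\<Sum>k<n. X $$ (k,l)) = \<rho>"
  and j: "j < n"
  shows "(Sinv n * X * Smat n) $$ (0,j) = (if j = 0 then \<rho> else 0)"
proof -
  have n: "0 < n" using j by auto
  have SX: "Sinv n * X \<in> carrier_mat n n" by (rule mult_carrier_mat[OF Sinv_carrier X])
  have 1: "(Sinv n * X) $$ (0,l) = \<rho> / real n" if l: "l < n" for l
  proof -
    have "(Sinv n * X) $$ (0,l) = (\<Sum>k<n. Sinv n $$ (0,k) * X $$ (k,l))"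
      by (rule mult_index[OF _ X n l], auto)
    also have "\<dots> = (\<Sum>k<n. (1 / real n) * X $$ (k,l))" by (rule sum.cong, auto simp: Sinv_def)
    finally show ?thesis using cs[OF l] by (simp add: sum_divide_distrib[symmetric])
  qed
  have "(Sinv n * X * Smat n) $$ (0,j) = (\<Sum>l<n. (Sinv n * X) $$ (0,l) * Smat n $$ (l,j))"
    by (rule mult_index[OF SX _ n j], auto)
  also have "\<dots> = (\<rho> / real n) * (\<Sum>l<n. Smat n $$ (l,j))" unfolding sum_distrib_left by (rule sum.cong, auto simp: 1)
  finally show ?thesis unfolding Smat_colsum[OF j] using n by simp
qed

definition Jmat :: "nat \<Rightarrow> real mat" where "Jmat n = mat n n (\<lambda>_. 1)"
lemma Jmat_carrier[simp]: "Jmat n \<in> carrier_mat n n" unfolding Jmat_def by auto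

lemma transf_J: assumes i: "i < n" and j: "j < n"
  shows "(Sinv n * Jmat n * Smat n) $$ (i,j) = (if i = 0 \<and> j = 0 then real n else 0)"
proof -
  have SX: "Sinv n * Jmat n \<in> carrier_mat n n" by (rule mult_carrier_mat[OF Sinv_carrier Jmat_carrier])
  have 1: "(Sinv n * Jmat n) $$ (i,l) = (if i = 0 then 1 else 0)" if l: "l < n" for l
  proof -
    have "(Sinv n * Jmat n) $$ (i,l) = (\<Sum>k<n. Sinv n $$ (i,k) * Jmat n $$ (k,l))"
      by (rule mult_index[OF _ _ i l], auto)
    also have "\<dots> = (\<Sum>k<n. Sinv n $$ (i,k))" by (rule sum.cong, insert l, auto simp: Jmat_def)
    finally show ?thesis using Sinv_rowsum[OF i] by simp
  qed
  have "(Sinv n * Jmat n * Smat n) $$ (i,j) = (\<Sum>l<n. (Sinv n * Jmat n) $$ (i,l) * Smat n $$ (l,j))"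
    by (rule mult_index[OF SX _ i j], auto)
  also have "\<dots> = (if i = 0 then 1 else 0) * (\<Sum>l<n. Smat n $$ (l,j))" unfolding sum_distrib_left by (rule sum.cong, auto simp: 1)
  finally show ?thesis unfolding Smat_colsum[OF j] by simp
qed






lemma char_poly_block_diag: assumes A1: "(A1 :: real mat) \<in> carrier_mat n1 n1" and A4: "A4 \<in> carrier_mat n2 n2"
  shows "char_poly (four_block_mat A1 (0\<^sub>m n1 n2) (0\<^sub>m n2 n1) A4) = char_poly A1 * char_poly A4"
proof -
  let ?cm = "\<lambda> A. [:0, 1:] \<cdot>\<^sub>m 1\<^sub>m (dim_row A) + map_mat (\<lambda>a. [:- a:]) A"
  have "char_poly (four_block_mat A1 (0\<^sub>m n1 n2) (0\<^sub>m n2 n1) A4) = det (?cm (four_block_mat A1 (0\<^sub>m n1 n2) (0\<^sub>m n2 n1) A4))"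
    unfolding char_poly_defs using A1 A4 by simp
  also have "?cm (four_block_mat A1 (0\<^sub>m n1 n2) (0\<^sub>m n2 n1) A4) = four_block_mat (?cm A1) (0\<^sub>m n1 n2) (0\<^sub>m n2 n1) (?cm A4)"
    by (rule eq_matI, insert A1 A4, auto simp: one_poly_def)
  also have "det \<dots> = det (?cm A1) * det (?cm A4)"
    by (rule det_four_block_mat_lower_left_zero[OF _ _ refl], insert A1 A4, auto)
  also have "\<dots> = char_poly A1 * char_poly A4" unfolding char_poly_defs ..
  finally show ?thesis .
qed

lemma char_poly_1: "char_poly (mat 1 1 (\<lambda>_. c :: real)) = [:-c, 1:]"
proof -
  have "char_poly (mat 1 1 (\<lambda>_. c :: real)) = (\<Prod>a\<leftarrow>diag_mat (mat 1 1 (\<lambda>_. c :: real)). [:- a, 1:])"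
    by (rule char_poly_upper_triangular, auto)
  also have "diag_mat (mat 1 1 (\<lambda>_. c :: real)) = [c]" by (simp add: diag_mat_def)
  finally show ?thesis by simp
qed

lemma char_poly_zero: "char_poly (0\<^sub>m k k :: real mat) = [:0, 1:] ^ k"
proof -
  have "char_poly (0\<^sub>m k k :: real mat) = (\<Prod>a\<leftarrow>diag_mat (0\<^sub>m k k :: real mat). [:- a, 1:])"
    by (rule char_poly_upper_triangular, auto)
  also have "diag_mat (0\<^sub>m k k :: real mat) = replicate k 0" 
    by (rule nth_equalityI, auto simp: diag_mat_def)
  finally show ?thesis by (simp add: prod_list_replicate)
qed

lemma perm_char_poly: assumes M: "(M :: real mat) \<in> carrier_mat N N"
  and bij: "bij_betw \<sigma> {..<N} {..<N}"
  shows "char_poly (mat N N (\<lambda>(r,c). M $$ (\<sigma> r, \<sigma> c))) = char_poly M"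
proof -
  define Pm where "Pm = mat N N (\<lambda>(r,c). if r = \<sigma> c then 1 else (0::real))"
  define Qm where "Qm = mat N N (\<lambda>(r,c). if \<sigma> r = c then 1 else (0::real))"
  define \<tau> where "\<tau> = inv_into {..<N} \<sigma>"
  have sig: "r < N \<Longrightarrow> \<sigma> r < N" for r using bij by (auto simp: bij_betw_def)
  have inj: "r < N \<Longrightarrow> c < N \<Longrightarrow> \<sigma> r = \<sigma> c \<longleftrightarrow> r = c" for r c
    using bij by (auto simp: bij_betw_def inj_on_def)
  have tau: "r < N \<Longrightarrow> \<tau> r < N \<and> \<sigma> (\<tau> r) = r" for r unfolding \<tau>_def
    using bij_betw_inv_into_right[OF bij, of r] inv_into_into[of r \<sigma> "{..<N}"] bij unfolding bij_betw_def by auto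
  have P: "Pm \<in> carrier_mat N N" and Q: "Qm \<in> carrier_mat N N" unfolding Pm_def Qm_def by auto
  have MP: "M * Pm \<in> carrier_mat N N" using M P by (rule mult_carrier_mat)
  have e1: "(M * Pm) $$ (k,c) = M $$ (k, \<sigma> c)" if "k < N" "c < N" for k c
  proof -
    have "(M * Pm) $$ (k,c) = (\<Sum>l<N. M $$ (k,l) * Pm $$ (l,c))" by (rule mult_index[OF M P that])
    also have "\<dots> = (\<Sum>l<N. if l = \<sigma> c then M $$ (k,l) else 0)"
      by (rule sum.cong, insert that, auto simp: Pm_def)
    finally show ?thesis using sig[of c] that by simp
  qed
  have eM: "mat N N (\<lambda>(r,c). M $$ (\<sigma> r, \<sigma> c)) = Qm * M * Pm"
  proof (rule eq_matI)
    fix r c assume "r < dim_row (Qm * M * Pm)" "c < dim_col (Qm * M * Pm)"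
    hence rc: "r < N" "c < N" using Q P by auto
    have "(Qm * M * Pm) = Qm * (M * Pm)" by (rule assoc_mult_mat[OF Q M P])
    hence "(Qm * M * Pm) $$ (r,c) = (\<Sum>k<N. Qm $$ (r,k) * (M * Pm) $$ (k,c))"
      using mult_index[OF Q MP rc] by simp
    also have "\<dots> = (\<Sum>k<N. if k = \<sigma> r then M $$ (k, \<sigma> c) else 0)"
      by (rule sum.cong, insert rc e1, auto simp: Qm_def)
    finally show "mat N N (\<lambda>(r,c). M $$ (\<sigma> r, \<sigma> c)) $$ (r,c) = (Qm * M * Pm) $$ (r,c)"
      using rc sig[of r] by simp
  qed (insert P Q, auto)
  have QP: "Qm * Pm = 1\<^sub>m N"
  proof (rule eq_matI)
    fix r c assume "r < dim_row (1\<^sub>m N)" "c < dim_col (1\<^sub>m N)"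
    hence rc: "r < N" "c < N" by auto
    have "(Qm * Pm) $$ (r,c) = (\<Sum>k<N. Qm $$ (r,k) * Pm $$ (k,c))" by (rule mult_index[OF Q P rc])
    also have "\<dots> = (\<Sum>k<N. if k = \<sigma> r then (if \<sigma> r = \<sigma> c then 1 else 0) else 0)"
      by (rule sum.cong, insert rc, auto simp: Qm_def Pm_def)
    finally show "(Qm * Pm) $$ (r,c) = 1\<^sub>m N $$ (r,c)" using rc sig[of r] inj[OF rc] by simp
  qed (insert P Q, auto)
  have PQ: "Pm * Qm = 1\<^sub>m N"
  proof (rule eq_matI)
    fix r c assume "r < dim_row (1\<^sub>m N)" "c < dim_col (1\<^sub>m N)"
    hence rc: "r < N" "c < N" by auto
    have "(Pm * Qm) $$ (r,c) = (\<Sum>k<N. Pm $$ (r,k) * Qm $$ (k,c))" by (rule mult_index[OF P Q rc])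
    also have "\<dots> = (\<Sum>k<N. if k = \<tau> r then (if r = c then 1 else 0) else 0)"
    proof (rule sum.cong[OF refl])
      fix k assume "k \<in> {..<N}"
      hence k: "k < N" by auto
      have "r = \<sigma> k \<longleftrightarrow> k = \<tau> r" using tau[OF rc(1)] inj[OF k] by metis
      thus "Pm $$ (r, k) * Qm $$ (k, c) = (if k = \<tau> r then (if r = c then 1 else 0) else 0)"
        using rc k by (auto simp: Pm_def Qm_def)
    qed
    finally show "(Pm * Qm) $$ (r,c) = 1\<^sub>m N $$ (r,c)" using rc tau[OF rc(1)] by simp
  qed (insert P Q, auto)
  have "similar_mat (mat N N (\<lambda>(r,c). M $$ (\<sigma> r, \<sigma> c))) M"
  proof -
    let ?M' = "mat N N (\<lambda>(r,c). M $$ (\<sigma> r, \<sigma> c))"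
    have "similar_mat_wit ?M' M Qm Pm"
      unfolding similar_mat_wit_def Let_def
    proof (intro conjI)
      show "{?M', M, Qm, Pm} \<subseteq> carrier_mat (dim_row ?M') (dim_row ?M')" using P Q M by simp
    qed (simp_all add: QP PQ eM[symmetric])
    thus ?thesis unfolding similar_mat_def by blast
  qed
  thus ?thesis by (rule char_poly_similar)
qed




definition ii :: "nat \<Rightarrow> nat \<Rightarrow> nat \<Rightarrow> nat" where
  "ii n m t = (if t < n then t else if t < n + m - 1 then 0 else (t - (n + m - 1)) div (m - 1) + 1)"
definition pp :: "nat \<Rightarrow> nat \<Rightarrow> nat \<Rightarrow> nat" where
  "pp n m t = (if t < n then 0 else if t < n + m - 1 then t - n + 1 else (t - (n + m - 1)) mod (m - 1) + 1)"
definition sig :: "nat \<Rightarrow> nat \<Rightarrow> nat \<Rightarrow> nat" where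
  "sig n m t = ii n m t * m + pp n m t"

lemma nm_split: assumes "(n::nat) > 0" "(m::nat) > 0" shows "n * m = (n + m - 1) + (n - 1) * (m - 1)"
proof -
  obtain a b where "n = Suc a" "m = Suc b" using assms by (metis gr0_implies_Suc)
  thus ?thesis by (simp add: algebra_simps)
qed

lemma ii_pp_bound: assumes n: "n > 0" and m: "m > 0" and t: "t < n * m"
  shows "ii n m t < n \<and> pp n m t < m"
proof (cases "t < n + m - 1")
  case True thus ?thesis unfolding ii_def pp_def using n m by auto
next
  case False
  define u where "u = t - (n + m - 1)"
  have u: "u < (n - 1) * (m - 1)" using t False nm_split[OF n m] unfolding u_def by linarith
  hence m1: "m - 1 > 0" by (cases "m - 1", auto)
  have "u div (m - 1) < n - 1" using u by (simp add: less_mult_imp_div_less)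
  moreover have "u mod (m - 1) < m - 1" using m1 by simp
  ultimately show ?thesis unfolding ii_def pp_def u_def[symmetric] using False n by auto
qed

lemma sig_div_mod: assumes n: "n > 0" and m: "m > 0" and t: "t < n * m"
  shows "sig n m t div m = ii n m t" "sig n m t mod m = pp n m t"
  using ii_pp_bound[OF assms] unfolding sig_def by auto

lemma sig_bound: assumes n: "n > 0" and m: "m > 0" and t: "t < n * m"
  shows "sig n m t < n * m"
proof -
  from ii_pp_bound[OF assms] have b: "ii n m t < n" "pp n m t < m" by auto
  have "sig n m t < (ii n m t + 1) * m" using b unfolding sig_def by simp
  also have "\<dots> \<le> n * m" using b by (intro mult_right_mono, auto)
  finally show ?thesis .
qed

lemma sig_inj: assumes n: "n > 0" and m: "m > 0"
  shows "inj_on (sig n m) {..<n*m}"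
proof (rule inj_onI)
  fix r c assume r: "r \<in> {..<n*m}" and c: "c \<in> {..<n*m}" and eq: "sig n m r = sig n m c"
  have rr: "r < n * m" and cc: "c < n * m" using r c by auto
  have i: "ii n m r = ii n m c" 
    using sig_div_mod(1)[OF n m rr] sig_div_mod(1)[OF n m cc] eq by simp
  have p: "pp n m r = pp n m c" 
    using sig_div_mod(2)[OF n m rr] sig_div_mod(2)[OF n m cc] eq by simp
  define L where "L = n + m - 1"
  have iiL: "ii n m t = (if t < n then t else if t < L then 0 else (t - L) div (m - 1) + 1)" for t
    unfolding ii_def L_def ..
  have ppL: "pp n m t = (if t < n then 0 else if t < L then t - n + 1 else (t - L) mod (m - 1) + 1)" for t
    unfolding pp_def L_def ..
  show "r = c"
  proof (cases "r < n")
    case rn: True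
    show ?thesis
    proof (cases "c < n")
      case True thus ?thesis using i rn unfolding iiL by simp
    next
      case False thus ?thesis using p rn unfolding ppL by (simp split: if_splits)
    qed
  next
    case rn: False
    show ?thesis
    proof (cases "c < n")
      case True thus ?thesis using p rn unfolding ppL by (simp split: if_splits)
    next
      case cn: False
      show ?thesis
      proof (cases "r < L")
        case rL: True
        show ?thesis
        proof (cases "c < L")
          case True thus ?thesis using p rn cn rL unfolding ppL by simp
        next
          case False thus ?thesis using i rn cn rL unfolding iiL by simp
        qed
      next
        case rL: False
        show ?thesis
        proof (cases "c < L")
          case True thus ?thesis using i rn cn rL unfolding iiL by simp
        next
          case cL: False
          have "(r - L) div (m - 1) = (c - L) div (m - 1)" "(r - L) mod (m - 1) = (c - L) mod (m - 1)"
            using i p rn cn rL cL unfolding iiL ppL by auto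
          hence "r - L = c - L" by (metis div_mult_mod_eq)
          thus ?thesis using rL cL by linarith
        qed
      qed
    qed
  qed
qed

lemma sig_bij: assumes n: "n > 0" and m: "m > 0"
  shows "bij_betw (sig n m) {..<n*m} {..<n*m}"
proof -
  have sub: "sig n m ` {..<n*m} \<subseteq> {..<n*m}" using sig_bound[OF n m] by auto
  have "sig n m ` {..<n*m} = {..<n*m}" by (rule endo_inj_surj[OF _ sub sig_inj[OF n m]], simp)
  thus ?thesis using sig_inj[OF n m] unfolding bij_betw_def by auto
qed




lemma similar_conj: assumes M: "(M :: real mat) \<in> carrier_mat N N" and P: "P \<in> carrier_mat N N"
  and Q: "Q \<in> carrier_mat N N" and PQ: "P * Q = 1\<^sub>m N" and QP: "Q * P = 1\<^sub>m N"
  shows "char_poly (Q * M * P) = char_poly M"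
proof -
  have QMP: "Q * M * P \<in> carrier_mat N N" using Q M P by (metis mult_carrier_mat)
  have "similar_mat_wit (Q * M * P) M Q P"
    unfolding similar_mat_wit_def Let_def using QMP M P Q PQ QP by auto
  hence "similar_mat (Q * M * P) M" unfolding similar_mat_def by blast
  thus ?thesis by (rule char_poly_similar)
qed

definition sub1 :: "real mat \<Rightarrow> nat \<Rightarrow> real mat" where
  "sub1 X k = mat k k (\<lambda>(i,j). X $$ (Suc i, Suc j))"

lemma sub1_carrier[simp]: "sub1 X k \<in> carrier_mat k k" unfolding sub1_def by auto

lemma decomp1: assumes X: "X \<in> carrier_mat n n" and n: "n > 0"
  and rs: "\<And>k. k < n \<Longrightarrow> (\<Sum>l<n. X $$ (k,l)) = \<rho>"
  and cs: "\<And>l. l < n \<Longrightarrow> (\<Sum>k<n. X $$ (k,l)) = \<rho>"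
  shows "char_poly X = [:-\<rho>, 1:] * char_poly (sub1 (Sinv n * X * Smat n) (n - 1))"
proof -
  let ?Xt = "Sinv n * X * Smat n"
  have "char_poly ?Xt = char_poly X"
    by (rule similar_conj[OF X Smat_carrier Sinv_carrier Smat_Sinv[OF n] Sinv_Smat[OF n]])
  have Xt: "?Xt \<in> carrier_mat n n" using X by (metis Sinv_carrier Smat_carrier mult_carrier_mat)
  have n1: "1 + (n - 1) = n" using n by simp
  have "?Xt = four_block_mat (mat 1 1 (\<lambda>_. \<rho>)) (0\<^sub>m 1 (n - 1)) (0\<^sub>m (n - 1) 1) (sub1 ?Xt (n - 1))"
  proof (rule eq_matI)
    fix i j assume "i < dim_row (four_block_mat (mat 1 1 (\<lambda>_. \<rho>)) (0\<^sub>m 1 (n - 1)) (0\<^sub>m (n - 1) 1) (sub1 ?Xt (n - 1)))"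
      "j < dim_col (four_block_mat (mat 1 1 (\<lambda>_. \<rho>)) (0\<^sub>m 1 (n - 1)) (0\<^sub>m (n - 1) 1) (sub1 ?Xt (n - 1)))"
    hence i: "i < n" and j: "j < n" using n by (auto simp: sub1_def)
    show "?Xt $$ (i,j) = four_block_mat (mat 1 1 (\<lambda>_. \<rho>)) (0\<^sub>m 1 (n - 1)) (0\<^sub>m (n - 1) 1) (sub1 ?Xt (n - 1)) $$ (i,j)"
      using i j transf_col0[OF X rs i] transf_row0[OF X cs j]
      by (cases i; cases j; auto simp: sub1_def)
  qed (insert Xt n, auto simp: sub1_def)
  hence "char_poly ?Xt = char_poly (mat 1 1 (\<lambda>_. \<rho>)) * char_poly (sub1 ?Xt (n - 1))"
    by (metis char_poly_block_diag sub1_carrier mat_carrier)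
  thus ?thesis using \<open>char_poly ?Xt = char_poly X\<close> char_poly_1 by simp
qed

lemma sums_of: assumes X: "X \<in> carrier_mat n n" and sym: "transpose_mat X = X"
  and ev: "X *\<^sub>v ones_vec n = \<rho> \<cdot>\<^sub>v ones_vec n"
  shows "\<And>k. k < n \<Longrightarrow> (\<Sum>l<n. X $$ (k,l)) = \<rho>"
    "\<And>l. l < n \<Longrightarrow> (\<Sum>k<n. X $$ (k,l)) = \<rho>"
proof -
  fix k assume k: "k < n"
  have "(X *\<^sub>v ones_vec n) $ k = (\<rho> \<cdot>\<^sub>v ones_vec n) $ k" using ev by simp
  thus "(\<Sum>l<n. X $$ (k,l)) = \<rho>" using X k
    by (simp add: ones_vec_def scalar_prod_def lessThan_atLeast0)
next
  fix l assume l: "l < n"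
  have e: "X $$ (k,l) = X $$ (l,k)" if "k < n" for k
    using arg_cong[OF sym, of "\<lambda>Y. Y $$ (l,k)"] X that l by simp
  have "(X *\<^sub>v ones_vec n) $ l = (\<rho> \<cdot>\<^sub>v ones_vec n) $ l" using ev by simp
  hence "(\<Sum>k<n. X $$ (l,k)) = \<rho>" using X l
    by (simp add: ones_vec_def scalar_prod_def lessThan_atLeast0)
  thus "(\<Sum>k<n. X $$ (k,l)) = \<rho>" using e by simp
qed



theorem theorem6:
  fixes A B :: "real mat" and n m :: nat and \<rho>A \<rho>B :: real
  assumes "n > 0" and "m > 0"
    and "A \<in> carrier_mat n n" and "transpose_mat A = A"
    and "A *\<^sub>v ones_vec n = \<rho>A \<cdot>\<^sub>v ones_vec n" and "\<rho>A > 0"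
    and "B \<in> carrier_mat m m" and "transpose_mat B = B"
    and "B *\<^sub>v ones_vec m = \<rho>B \<cdot>\<^sub>v ones_vec m" and "\<rho>B > 0"
  shows "n_neg (diamond A B) = n_neg A + n_neg B
    \<and> int (n_pos (diamond A B)) = int (n_pos A) + int (n_pos B) - 1
    \<and> int (n_zero (diamond A B)) = int n * int m - int n - int m + 1 + int (n_zero A) + int (n_zero B)"
proof -
  note n = assms(1) and m = assms(2) and A = assms(3) and B = assms(7)
  note rsA = sums_of(1)[OF A assms(4) assms(5)] and csA = sums_of(2)[OF A assms(4) assms(5)]
  note rsB = sums_of(1)[OF B assms(8) assms(9)] and csB = sums_of(2)[OF B assms(8) assms(9)]
  define At where "At = Sinv n * A * Smat n"
  define Bt where "Bt = Sinv m * B * Smat m"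
  define Jnt where "Jnt = Sinv n * Jmat n * Smat n"
  define Jmt where "Jmt = Sinv m * Jmat m * Smat m"
  define a' where "a' = sub1 At (n - 1)"
  define b' where "b' = sub1 Bt (m - 1)"
  have cpA: "char_poly A = [:-\<rho>A, 1:] * char_poly a'"
    using decomp1[OF A n rsA csA] unfolding a'_def At_def .
  have cpB: "char_poly B = [:-\<rho>B, 1:] * char_poly b'"
    using decomp1[OF B m rsB csB] unfolding b'_def Bt_def .
  have At: "At \<in> carrier_mat n n" unfolding At_def using A by (metis Sinv_carrier Smat_carrier mult_carrier_mat)
  have Bt: "Bt \<in> carrier_mat m m" unfolding Bt_def using B by (metis Sinv_carrier Smat_carrier mult_carrier_mat)
  have At00: "At $$ (0,0) = \<rho>A" using transf_col0[OF A rsA n] unfolding At_def by simp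
  have Ati0: "\<And>i. 0 < i \<Longrightarrow> i < n \<Longrightarrow> At $$ (i,0) = 0" using transf_col0[OF A rsA] unfolding At_def by simp
  have At0j: "\<And>j. 0 < j \<Longrightarrow> j < n \<Longrightarrow> At $$ (0,j) = 0" using transf_row0[OF A csA] unfolding At_def by simp
  have Bt00: "Bt $$ (0,0) = \<rho>B" using transf_col0[OF B rsB m] unfolding Bt_def by simp
  have Bti0: "\<And>i. 0 < i \<Longrightarrow> i < m \<Longrightarrow> Bt $$ (i,0) = 0" using transf_col0[OF B rsB] unfolding Bt_def by simp
  have Bt0j: "\<And>j. 0 < j \<Longrightarrow> j < m \<Longrightarrow> Bt $$ (0,j) = 0" using transf_row0[OF B csB] unfolding Bt_def by simp
  have Jnt: "\<And>i j. i < n \<Longrightarrow> j < n \<Longrightarrow> Jnt $$ (i,j) = (if i = 0 \<and> j = 0 then real n else 0)"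
    unfolding Jnt_def by (rule transf_J)
  have Jmt: "\<And>i j. i < m \<Longrightarrow> j < m \<Longrightarrow> Jmt $$ (i,j) = (if i = 0 \<and> j = 0 then real m else 0)"
    unfolding Jmt_def by (rule transf_J)
  define N where "N = n * m"
  define M where "M = diamond A B"
  have Jn: "Jmat n \<in> carrier_mat n n" and Jm: "Jmat m \<in> carrier_mat m m" by auto
  have K1: "kron A (Jmat m) \<in> carrier_mat N N" unfolding N_def by (rule kron_carrier[OF A Jm])
  have K2: "kron (Jmat n) B \<in> carrier_mat N N" unfolding N_def by (rule kron_carrier[OF Jn B])
  have Meq: "M = kron A (Jmat m) + kron (Jmat n) B"
  proof (rule eq_matI)
    fix r c assume "r < dim_row (kron A (Jmat m) + kron (Jmat n) B)" "c < dim_col (kron A (Jmat m) + kron (Jmat n) B)"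
    hence r: "r < n * m" and c: "c < n * m" using K2 unfolding N_def by auto
    show "M $$ (r,c) = (kron A (Jmat m) + kron (Jmat n) B) $$ (r,c)"
      unfolding M_def diamond_def Let_def index_add_mat(1)[OF r[folded N_def, folded carrier_matD(1)[OF K2]] c[folded N_def, folded carrier_matD(2)[OF K2]]]
      using kron_index[OF A Jm r c] kron_index[OF Jn B r c] A B r c div_lt[OF r] div_lt[OF c] mod_lt[OF r] mod_lt[OF c]
      by (simp add: Jmat_def)
  qed (insert A B K1 K2, auto simp: M_def diamond_def N_def)
  have M: "M \<in> carrier_mat N N" unfolding Meq using K1 K2 by simp
  define P where "P = kron (Smat n) (Smat m)"
  define Q where "Q = kron (Sinv n) (Sinv m)"
  have P: "P \<in> carrier_mat N N" unfolding P_def N_def by (rule kron_carrier, auto)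
  have Q: "Q \<in> carrier_mat N N" unfolding Q_def N_def by (rule kron_carrier, auto)
  have PQ: "P * Q = 1\<^sub>m N" unfolding P_def Q_def N_def
    by (subst kron_mult[OF Smat_carrier Sinv_carrier Smat_carrier Sinv_carrier m], simp add: Smat_Sinv[OF n] Smat_Sinv[OF m] kron_one[OF m])
  have QP: "Q * P = 1\<^sub>m N" unfolding P_def Q_def N_def
    by (subst kron_mult[OF Sinv_carrier Smat_carrier Sinv_carrier Smat_carrier m], simp add: Sinv_Smat[OF n] Sinv_Smat[OF m] kron_one[OF m])
  define D where "D = Q * M * P"
  have cpD: "char_poly D = char_poly M" unfolding D_def by (rule similar_conj[OF M P Q PQ QP])
  have Deq: "D = kron At Jmt + kron Jnt Bt"
  proof -
    have QK1: "Q * kron A (Jmat m) \<in> carrier_mat N N" using Q K1 by (rule mult_carrier_mat)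
    have QK2: "Q * kron (Jmat n) B \<in> carrier_mat N N" using Q K2 by (rule mult_carrier_mat)
    have "D = (Q * kron A (Jmat m) + Q * kron (Jmat n) B) * P"
      unfolding D_def Meq by (subst mult_add_distrib_mat[OF Q K1 K2], rule refl)
    also have "\<dots> = Q * kron A (Jmat m) * P + Q * kron (Jmat n) B * P"
      by (rule add_mult_distrib_mat[OF QK1 QK2 P])
    also have "Q * kron A (Jmat m) * P = kron At Jmt"
    proof -
      have SA: "Sinv n * A \<in> carrier_mat n n" using Sinv_carrier A by (rule mult_carrier_mat)
      have SJ: "Sinv m * Jmat m \<in> carrier_mat m m" using Sinv_carrier Jm by (rule mult_carrier_mat)
      show ?thesis unfolding Q_def P_def At_def Jmt_def
        unfolding kron_mult[OF Sinv_carrier A Sinv_carrier Jm m] kron_mult[OF SA Smat_carrier SJ Smat_carrier m] ..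
    qed
    also have "Q * kron (Jmat n) B * P = kron Jnt Bt"
    proof -
      have SB: "Sinv m * B \<in> carrier_mat m m" using Sinv_carrier B by (rule mult_carrier_mat)
      have SJ: "Sinv n * Jmat n \<in> carrier_mat n n" using Sinv_carrier Jn by (rule mult_carrier_mat)
      show ?thesis unfolding Q_def P_def Bt_def Jnt_def
        unfolding kron_mult[OF Sinv_carrier Jn Sinv_carrier B m] kron_mult[OF SJ Smat_carrier SB Smat_carrier m] ..
    qed
    finally show ?thesis .
  qed
  have Jnt_c: "Jnt \<in> carrier_mat n n" and Jmt_c: "Jmt \<in> carrier_mat m m" 
    unfolding Jnt_def Jmt_def by (metis Sinv_carrier Smat_carrier Jmat_carrier mult_carrier_mat)+
  have KA: "kron At Jmt \<in> carrier_mat N N" unfolding N_def by (rule kron_carrier[OF At Jmt_c])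
  have KB: "kron Jnt Bt \<in> carrier_mat N N" unfolding N_def by (rule kron_carrier[OF Jnt_c Bt])
  have Dent: "D $$ (r,c) = At $$ (r div m, c div m) * Jmt $$ (r mod m, c mod m) + Jnt $$ (r div m, c div m) * Bt $$ (r mod m, c mod m)"
    if r: "r < N" and c: "c < N" for r c
    unfolding Deq using index_add_mat(1)[of r "kron Jnt Bt" c "kron At Jmt"] KA KB r c
      kron_index[OF At Jmt_c, of r c] kron_index[OF Jnt_c Bt, of r c] unfolding N_def by simp
  have D: "D \<in> carrier_mat N N" unfolding Deq using KA KB by simp
  define D' where "D' = mat N N (\<lambda>(r,c). D $$ (sig n m r, sig n m c))"
  have cpD': "char_poly D' = char_poly D" unfolding D'_def
    by (rule perm_char_poly[OF D], unfold N_def, rule sig_bij[OF n m])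
  have D'ent: "D' $$ (r,c) = At $$ (ii n m r, ii n m c) * Jmt $$ (pp n m r, pp n m c) + Jnt $$ (ii n m r, ii n m c) * Bt $$ (pp n m r, pp n m c)"
    if r: "r < N" and c: "c < N" for r c
    using r c Dent[OF sig_bound[OF n m, of r, folded N_def] sig_bound[OF n m, of c, folded N_def]]
      sig_div_mod[OF n m, of r, folded N_def] sig_div_mod[OF n m, of c, folded N_def] unfolding D'_def 
    by (simp add: N_def)
  define L where "L = n + m - 1"
  define K where "K = (n - 1) * (m - 1)"
  have NLK: "N = L + K" using nm_split[OF n m] unfolding N_def L_def K_def .
  define c0 where "c0 = real m * \<rho>A + real n * \<rho>B"
  have c0: "c0 > 0" unfolding c0_def using n m assms(6) assms(10) by (simp add: add_pos_pos)
  have a': "a' \<in> carrier_mat (n - 1) (n - 1)" and b': "b' \<in> carrier_mat (m - 1) (m - 1)" 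
    unfolding a'_def b'_def by auto
  have ma': "real m \<cdot>\<^sub>m a' \<in> carrier_mat (n - 1) (n - 1)" using a' by simp
  have nb': "real n \<cdot>\<^sub>m b' \<in> carrier_mat (m - 1) (m - 1)" using b' by simp
  define T1 where "T1 = four_block_mat (mat 1 1 (\<lambda>_. c0)) (0\<^sub>m 1 (n - 1)) (0\<^sub>m (n - 1) 1) (real m \<cdot>\<^sub>m a')"
  have T1: "T1 \<in> carrier_mat n n"
  proof -
    have "T1 \<in> carrier_mat (1 + (n - 1)) (1 + (n - 1))" unfolding T1_def 
      by (rule four_block_carrier_mat[OF _ ma'], simp)
    thus ?thesis using n by simp
  qed
  define T2 where "T2 = four_block_mat T1 (0\<^sub>m n (m - 1)) (0\<^sub>m (m - 1) n) (real n \<cdot>\<^sub>m b')"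
  have T2: "T2 \<in> carrier_mat L L"
  proof -
    have "T2 \<in> carrier_mat (n + (m - 1)) (n + (m - 1))" unfolding T2_def 
      by (rule four_block_carrier_mat[OF T1 nb'])
    thus ?thesis using m unfolding L_def by simp
  qed
  define T3 where "T3 = four_block_mat T2 (0\<^sub>m L K) (0\<^sub>m K L) (0\<^sub>m K K)"
  have cpT3: "char_poly T3 = (([:-c0, 1:] * char_poly (real m \<cdot>\<^sub>m a')) * char_poly (real n \<cdot>\<^sub>m b')) * [:0, 1:] ^ K"
  proof -
    have 3: "char_poly T3 = char_poly T2 * [:0, 1:] ^ K" 
      unfolding T3_def char_poly_block_diag[OF T2 zero_carrier_mat] char_poly_zero ..
    have 2: "char_poly T2 = char_poly T1 * char_poly (real n \<cdot>\<^sub>m b')" 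
      unfolding T2_def by (rule char_poly_block_diag[OF T1 nb'])
    have 1: "char_poly T1 = [:-c0, 1:] * char_poly (real m \<cdot>\<^sub>m a')" 
      unfolding T1_def char_poly_block_diag[OF mat_carrier ma'] char_poly_1 ..
    show ?thesis unfolding 3 2 1 ..
  qed
  have T1ent: "T1 $$ (r,c) = (if r = 0 then (if c = 0 then c0 else 0) else if c = 0 then 0 else real m * At $$ (r,c))"
    if "r < n" "c < n" for r c
    using that n unfolding T1_def a'_def by (cases r; cases c; auto simp: sub1_def)
  have T2ent: "T2 $$ (r,c) = (if r < n then (if c < n then T1 $$ (r,c) else 0) else if c < n then 0 
      else real n * Bt $$ (r - n + 1, c - n + 1))"
    if "r < L" "c < L" for r c
    using that n m T1 unfolding T2_def b'_def L_def by (auto simp: sub1_def Suc_diff_le)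
  have T3ent: "T3 $$ (r,c) = (if r < L \<and> c < L then T2 $$ (r,c) else 0)"
    if "r < N" "c < N" for r c
    using that T2 NLK unfolding T3_def by auto
  have iip1: "ii n m r = r \<and> pp n m r = 0" if "r < n" for r using that unfolding ii_def pp_def by auto
  have iip2: "ii n m r = 0 \<and> pp n m r = r - n + 1" if "n \<le> r" "r < L" for r 
    using that unfolding ii_def pp_def L_def by auto
  have nL: "n \<le> L" using m unfolding L_def by auto
  have iip3: "ii n m r \<noteq> 0 \<and> pp n m r \<noteq> 0" if "\<not> r < L" for r 
    using that m unfolding ii_def pp_def L_def by auto
  have iipb: "ii n m r < n \<and> pp n m r < m" if "r < N" for r using ii_pp_bound[OF n m, of r] that N_def by auto
  have Bt0j': "\<And>c. n \<le> c \<Longrightarrow> c < L \<Longrightarrow> Bt $$ (0, Suc (c - n)) = 0" 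
    using Bt0j unfolding L_def by auto
  have Bti0': "\<And>c. n \<le> c \<Longrightarrow> c < L \<Longrightarrow> Bt $$ (Suc (c - n), 0) = 0" 
    using Bti0 unfolding L_def by auto
  have Bt0j'': "\<And>c. c \<noteq> 0 \<Longrightarrow> c < m \<Longrightarrow> Bt $$ (0, c) = 0" using Bt0j by auto
  have Bti0'': "\<And>c. c \<noteq> 0 \<Longrightarrow> c < m \<Longrightarrow> Bt $$ (c, 0) = 0" using Bti0 by auto
  have At0j': "\<And>c. c \<noteq> 0 \<Longrightarrow> c < n \<Longrightarrow> At $$ (0, c) = 0" using At0j by auto
  have Ati0': "\<And>c. c \<noteq> 0 \<Longrightarrow> c < n \<Longrightarrow> At $$ (c, 0) = 0" using Ati0 by auto
  have D'T3: "D' = T3"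
  proof (rule eq_matI)
    fix r c assume "r < dim_row T3" "c < dim_col T3"
    hence r: "r < N" and c: "c < N" using T2 NLK unfolding T3_def by auto
    have e: "D' $$ (r,c) = At $$ (ii n m r, ii n m c) * (if pp n m r = 0 \<and> pp n m c = 0 then real m else 0)
      + (if ii n m r = 0 \<and> ii n m c = 0 then real n else 0) * Bt $$ (pp n m r, pp n m c)"
      unfolding D'ent[OF r c] using iipb[OF r] iipb[OF c] Jmt Jnt by simp
    show "D' $$ (r,c) = T3 $$ (r,c)"
      unfolding e T3ent[OF r c]
    proof (cases "r < n"; cases "c < n"; cases "r < L"; cases "c < L")
    qed (insert nL r c iipb[OF r] iipb[OF c] Bt0j' Bti0' Bt0j'' Bti0'' At0j' Ati0', 
         auto simp: T2ent T1ent iip1 iip2 iip3 At00 Bt00 c0_def)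
  qed (insert T2 NLK, auto simp: D'_def T3_def)
  have cpM: "char_poly M = (([:-c0, 1:] * char_poly (real m \<cdot>\<^sub>m a')) * char_poly (real n \<cdot>\<^sub>m b')) * [:0, 1:] ^ K"
    using cpT3 cpD cpD' D'T3 by simp
  define p1 where "p1 = [:-c0, 1:]"
  define pa where "pa = char_poly (real m \<cdot>\<^sub>m a')"
  define pb where "pb = char_poly (real n \<cdot>\<^sub>m b')"
  define px where "px = ([:0, 1:] :: real poly) ^ K"
  have p1: "p1 \<noteq> 0" unfolding p1_def by simp
  have pa: "pa \<noteq> 0" unfolding pa_def by (rule char_poly_nz[OF ma'])
  have pb: "pb \<noteq> 0" unfolding pb_def by (rule char_poly_nz[OF nb'])
  have px: "px \<noteq> 0" unfolding px_def by simp
  have ca: "char_poly a' \<noteq> 0" by (rule char_poly_nz[OF a'])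
  have cb: "char_poly b' \<noteq> 0" by (rule char_poly_nz[OF b'])
  have cpM': "char_poly (diamond A B) = ((p1 * pa) * pb) * px" 
    using cpM unfolding M_def p1_def pa_def pb_def px_def .
  have cntM: "cnt P (char_poly (diamond A B)) = cnt P p1 + cnt P pa + cnt P pb + cnt P px" for P
    unfolding cpM' using p1 pa pb px by (simp add: cnt_mult)
  have cntA: "cnt P (char_poly A) = cnt P [:-\<rho>A, 1:] + cnt P (char_poly a')" for P
    unfolding cpA by (rule cnt_mult[OF _ ca], simp)
  have cntB: "cnt P (char_poly B) = cnt P [:-\<rho>B, 1:] + cnt P (char_poly b')" for P
    unfolding cpB by (rule cnt_mult[OF _ cb], simp)
  have mpos: "real m > 0" and npos: "real n > 0" using m n by auto
  have cnta: "cnt P pa = cnt P (char_poly a')" if "\<And>x. P (real m * x) = P x" for P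
    unfolding pa_def by (rule cnt_smult_cp[of _ "n - 1" "real m" P, OF a' mpos that])
  have cntb: "cnt P pb = cnt P (char_poly b')" if "\<And>x. P (real n * x) = P x" for P
    unfolding pb_def by (rule cnt_smult_cp[of _ "m - 1" "real n" P, OF b' npos that])
  have negm: "\<And>x. (real m * x < 0) = (x < 0)" using mpos by (simp add: mult_less_0_iff)
  have negn: "\<And>x. (real n * x < 0) = (x < 0)" using npos by (simp add: mult_less_0_iff)
  have posm: "\<And>x. (real m * x > 0) = (x > 0)" using mpos by (simp add: zero_less_mult_iff)
  have posn: "\<And>x. (real n * x > 0) = (x > 0)" using npos by (simp add: zero_less_mult_iff)
  have negx: "cnt (\<lambda>x. x < 0) px = 0" unfolding px_def by (rule cnt_X_pow, simp)
  have posx: "cnt (\<lambda>x. x > 0) px = 0" unfolding px_def by (rule cnt_X_pow, simp)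
  have part1: "n_neg (diamond A B) = n_neg A + n_neg B"
    unfolding n_neg_cnt cntM cntA cntB cnta[of "\<lambda>x. x < 0", OF negm] cntb[of "\<lambda>x. x < 0", OF negn] negx
    unfolding p1_def cnt_linear using c0 assms(6) assms(10) by simp
  have part2: "int (n_pos (diamond A B)) = int (n_pos A) + int (n_pos B) - 1"
    unfolding n_pos_cnt cntM cntA cntB cnta[of "\<lambda>x. x > 0", OF posm] cntb[of "\<lambda>x. x > 0", OF posn] posx
    unfolding p1_def cnt_linear using c0 assms(6) assms(10) by simp
  have oa: "order 0 pa = order 0 (char_poly a')" unfolding pa_def
    using order_cp_smult_real[OF a', of "real m" 0] m by simp
  have ob: "order 0 pb = order 0 (char_poly b')" unfolding pb_def
    using order_cp_smult_real[OF b', of "real n" 0] n by simp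
  have ox: "order 0 px = K" unfolding px_def order_linear_power by simp
  have o1: "order 0 p1 = 0" unfolding p1_def order_linear' using c0 by simp
  have zM: "n_zero (diamond A B) = order 0 p1 + order 0 pa + order 0 pb + order 0 px"
    unfolding n_zero_def cpM' using p1 pa pb px by (simp add: order_mult)
  have zA: "n_zero A = order 0 (char_poly a')"
  proof -
    have "order 0 ([:-\<rho>A, 1:] * char_poly a') = order 0 [:-\<rho>A, 1:] + order 0 (char_poly a')"
    proof (rule order_mult)
      have "[:-\<rho>A, 1:] \<noteq> (0 :: real poly)" by simp
      thus "[:-\<rho>A, 1:] * char_poly a' \<noteq> 0" using ca by (metis mult_eq_0_iff)
    qed
    thus ?thesis unfolding n_zero_def cpA order_linear' using assms(6) by simp
  qed
  have zB: "n_zero B = order 0 (char_poly b')"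
  proof -
    have "order 0 ([:-\<rho>B, 1:] * char_poly b') = order 0 [:-\<rho>B, 1:] + order 0 (char_poly b')"
    proof (rule order_mult)
      have "[:-\<rho>B, 1:] \<noteq> (0 :: real poly)" by simp
      thus "[:-\<rho>B, 1:] * char_poly b' \<noteq> 0" using cb by (metis mult_eq_0_iff)
    qed
    thus ?thesis unfolding n_zero_def cpB order_linear' using assms(10) by simp
  qed
  have Kint: "int K = int n * int m - int n - int m + 1"
  proof -
    obtain a b where "n = Suc a" "m = Suc b" using n m by (metis gr0_implies_Suc)
    thus ?thesis unfolding K_def by (simp add: algebra_simps)
  qed
  have part3: "int (n_zero (diamond A B)) = int n * int m - int n - int m + 1 + int (n_zero A) + int (n_zero B)"
    unfolding zM zA zB oa ob ox o1 using Kint by simp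
  show ?thesis using part1 part2 part3 by blast
qed

end
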